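(* For every integer $k\ge1$, $$\sum_{j=0}^{\lfloor\frac{k-1}{2}\rfloor}(k-2j)\binom{k}{j}^2=k\binom{k-1}{\lfloor\frac{k-1}{2}\rfloor}^2.$$ *)

theory Defs
  imports Main
begin

end

theory Submission
  imports Defs
begin

lemma step_term:
  fixes n j :: nat
  shows "(int (Suc n) - 2 * int (Suc j)) * int (Suc n choose Suc j) ^ 2
         = int (Suc n) * (int (n choose Suc j) ^ 2 - int (n choose j) ^ 2)"
proof -
  define c where "c = int (Suc n choose Suc j)"
  define a where "a = int (n choose j)"
  define b where "b = int (n choose Suc j)"
  have hc: "c = a + b" unfolding a_def b_def c_def by simp
  have h1: "int (Suc j) * c = int (Suc n) * a"
    unfolding a_def c_def by (metis Suc_times_binomial of_nat_mult)
  have h2: "(int n - int j) * c = int (Suc n) * b"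
  proof (cases "j \<le> n")
    case True
    have "(Suc n - Suc j) * (Suc n choose Suc j) = Suc n * ((Suc n - 1) choose Suc j)"
      by (rule binomial_absorb_comp)
    then show ?thesis
    proof -
      have "(n - j) * (Suc n choose Suc j) = Suc n * (n choose Suc j)" using \<open>(Suc n - Suc j) * _ = _\<close> by simp
      then have "int ((n - j) * (Suc n choose Suc j)) = int (Suc n * (n choose Suc j))" by simp
      then show ?thesis using True unfolding b_def c_def by (simp only: of_nat_mult of_nat_diff)
    qed
  next
    case False
    then show ?thesis unfolding b_def c_def by (simp del: binomial_Suc_Suc add: binomial_eq_0)
  qed
  have "(int (Suc n) - 2 * int (Suc j)) * c ^ 2 = ((int n - int j) * c - int (Suc j) * c) * c"
    by (simp add: power2_eq_square algebra_simps)
  also have "\<dots> = (int (Suc n) * b - int (Suc n) * a) * c" by (simp only: h1 h2)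
  also have "\<dots> = int (Suc n) * (b - a) * (a + b)" using hc by (simp add: algebra_simps)
  also have "\<dots> = int (Suc n) * (b ^ 2 - a ^ 2)" by (simp add: power2_eq_square algebra_simps)
  finally show ?thesis unfolding a_def b_def c_def .
qed

lemma gen:
  fixes n m :: nat
  shows "(\<Sum>j=0..m. (int (Suc n) - 2 * int j) * int (Suc n choose j) ^ 2)
         = int (Suc n) * int (n choose m) ^ 2"
proof (induction m)
  case 0 then show ?case by simp
next
  case (Suc m)
  then show ?case using step_term[of n m] by (simp add: algebra_simps)
qed

theorem lemma3p5:
  fixes k :: nat
  assumes "k \<ge> 1"
  shows "(\<Sum>j=0..(k - 1) div 2. (int k - 2 * int j) * int (k choose j) ^ 2)
         = int k * int ((k - 1) choose ((k - 1) div 2)) ^ 2"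
proof -
  obtain n where "k = Suc n" using assms by (cases k) auto
  then show ?thesis using gen[of n "(k-1) div 2"] by simp
qed

end
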